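(* Consider a polymer model on a graph $G=(V,E)$ of maximum degree $\Delta$ with $q$ spins, ground-state spins $g$, allowed polymers $\mathcal C(G)$ and weights $w$, satisfying the polymer sampling condition with a constant $C\ge10$. Then for every $u\in V$ and $\Lambda\subseteq V$, the procedure $\mathrm{MS\text{-}polymer}(G,u,\Lambda,g)$ terminates in finite time almost surely and, for every $\gamma$ (either $\emptyset$ or a polymer containing $u$), $$\Pr[\mathrm{MS\text{-}polymer}(G,u,\Lambda,g)\text{ outputs }\gamma]=\Pr_{\Gamma\sim\mu}[\Gamma(u)=\gamma\mid\Gamma\cap\Lambda=\emptyset].$$
   Context: Polymer model: each $v\in V$ has a ground-state spin $g_v\in[q]$. A polymer $\gamma$ is a connected vertex set $S_\gamma$ with an assignment $\sigma^\gamma_x\in[q]\setminus\{g_x\}$ for $x\in S_\gamma$; $|\gamma|=|S_\gamma|$; we identify $\gamma$ with $S_\gamma$ when taking intersections and neighbourhoods. Polymers are compatible if the graph distance between their vertex sets is at least $2$. $\mu$ is the distribution on sets $\Gamma\subseteq\mathcal C(G)$ of pairwise compatible polymers with $\mu(\Gamma)\propto\prod_{\gamma\in\Gamma}w_\gamma$. $\Gamma(u)$ is the polymer of $\Gamma$ containing $u$ if one exists, and $\emptyset$ otherwise; "$\Gamma\cap\Lambda=\emptyset$" means no polymer of $\Gamma$ contains a vertex of $\Lambda$. Polymer sampling condition with constant $C$: there is $\theta\ge C(1+\log((q-1)\Delta))$ with $w_\gamma\le\exp(-\theta|\gamma|)$ for all $\gamma\in\mathcal C(G)$. For $u\in V$,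 $\nu_u$ outputs each polymer $\gamma\in\mathcal C(G)$ containing $u$ with probability $w_\gamma$, and $\emptyset$ with the remaining probability. $N^+(x)=N(x)\cup\{x\}$ and $N^+(\gamma)=\bigcup_{x\in\gamma}N^+(x)$. $\mathrm{MS\text{-}polymer}(G,u,\Lambda,g)$ (with $\Lambda$ a local variable): if $u\in\Lambda$, return $\emptyset$; draw $\gamma\sim\nu_u$; if $\gamma$ contains a vertex of $\Lambda$, return $\emptyset$; for each $v\in N^+(\gamma)$, processing $v=u$ first: let $\gamma'\leftarrow\mathrm{MS\text{-}polymer}(G,v,\Lambda,g)$ with the current $\Lambda$; if $\gamma'\ne\emptyset$, return $\emptyset$; set $\Lambda\leftarrow\Lambda\cup\{v\}$. After the loop, return $\gamma$. *)

theory Defs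
  imports "HOL-Probability.Probability"
begin

text \<open>A polymer is a pair (S, sigma) where S is the vertex set
  and sigma the spin assignment on S (sigma x = 0 outside S, so the representation is unique).\<close>

type_synonym 'v polymer = "'v set \<times> ('v \<Rightarrow> nat)"

definition simple_graph :: "'v set \<Rightarrow> ('v \<Rightarrow> 'v \<Rightarrow> bool) \<Rightarrow> bool" where
  "simple_graph V E \<longleftrightarrow> finite V \<and> (\<forall>x y. E x y \<longrightarrow> x \<in> V \<and> y \<in> V \<and> x \<noteq> y \<and> E y x)"

definition nbhd :: "'v set \<Rightarrow> ('v \<Rightarrow> 'v \<Rightarrow> bool) \<Rightarrow> 'v \<Rightarrow> 'v set" where
  "nbhd V E x = {y \<in> V. E x y}"

definition max_degree :: "'v set \<Rightarrow> ('v \<Rightarrow> 'v \<Rightarrow> bool) \<Rightarrow> nat" where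
  "max_degree V E = Max ((\<lambda>v. card (nbhd V E v)) ` V)"

definition nbhd_plus :: "'v set \<Rightarrow> ('v \<Rightarrow> 'v \<Rightarrow> bool) \<Rightarrow> 'v set \<Rightarrow> 'v set" where
  "nbhd_plus V E S = (\<Union>x\<in>S. insert x (nbhd V E x))"

definition connected_set :: "('v \<Rightarrow> 'v \<Rightarrow> bool) \<Rightarrow> 'v set \<Rightarrow> bool" where
  "connected_set E S \<longleftrightarrow> S \<noteq> {} \<and>
     (\<forall>x\<in>S. \<forall>y\<in>S. (x, y) \<in> (Restr {(a, b). E a b} S)\<^sup>*)"

definition is_polymer :: "'v set \<Rightarrow> ('v \<Rightarrow> 'v \<Rightarrow> bool) \<Rightarrow> nat \<Rightarrow> ('v \<Rightarrow> nat) \<Rightarrow> 'v polymer \<Rightarrow> bool" where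
  "is_polymer V E q g \<gamma> \<longleftrightarrow> fst \<gamma> \<subseteq> V \<and> connected_set E (fst \<gamma>) \<and>
     (\<forall>x\<in>fst \<gamma>. snd \<gamma> x \<in> {1..q} - {g x}) \<and> (\<forall>x. x \<notin> fst \<gamma> \<longrightarrow> snd \<gamma> x = 0)"

text \<open>Compatible: graph distance between the vertex sets is at least 2.\<close>
definition compatible :: "('v \<Rightarrow> 'v \<Rightarrow> bool) \<Rightarrow> 'v polymer \<Rightarrow> 'v polymer \<Rightarrow> bool" where
  "compatible E \<gamma>1 \<gamma>2 \<longleftrightarrow> (\<forall>x\<in>fst \<gamma>1. \<forall>y\<in>fst \<gamma>2. x \<noteq> y \<and> \<not> E x y)"

definition poly_configs :: "('v \<Rightarrow> 'v \<Rightarrow> bool) \<Rightarrow> 'v polymer set \<Rightarrow> 'v polymer set set" where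
  "poly_configs E Cset = {\<Gamma>. \<Gamma> \<subseteq> Cset \<and> (\<forall>\<gamma>1\<in>\<Gamma>. \<forall>\<gamma>2\<in>\<Gamma>. \<gamma>1 \<noteq> \<gamma>2 \<longrightarrow> compatible E \<gamma>1 \<gamma>2)}"

definition poly_weight :: "('v polymer \<Rightarrow> real) \<Rightarrow> 'v polymer set \<Rightarrow> real" where
  "poly_weight w \<Gamma> = (\<Prod>\<gamma>\<in>\<Gamma>. w \<gamma>)"

definition mu_prob :: "('v \<Rightarrow> 'v \<Rightarrow> bool) \<Rightarrow> 'v polymer set \<Rightarrow> ('v polymer \<Rightarrow> real)
     \<Rightarrow> 'v polymer set set \<Rightarrow> real" where
  "mu_prob E Cset w A =
     (\<Sum>\<Gamma>\<in>poly_configs E Cset \<inter> A. poly_weight w \<Gamma>) / (\<Sum>\<Gamma>\<in>poly_configs E Cset. poly_weight w \<Gamma>)"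

definition mu_cond_prob :: "('v \<Rightarrow> 'v \<Rightarrow> bool) \<Rightarrow> 'v polymer set \<Rightarrow> ('v polymer \<Rightarrow> real)
     \<Rightarrow> 'v polymer set set \<Rightarrow> 'v polymer set set \<Rightarrow> real" where
  "mu_cond_prob E Cset w A B = mu_prob E Cset w (A \<inter> B) / mu_prob E Cset w B"

text \<open>Gamma(u): the polymer of Gamma containing u (Some), or the empty polymer (None).\<close>
definition poly_at :: "'v polymer set \<Rightarrow> 'v \<Rightarrow> 'v polymer option" where
  "poly_at \<Gamma> u = (if \<exists>\<gamma>\<in>\<Gamma>. u \<in> fst \<gamma> then Some (THE \<gamma>. \<gamma> \<in> \<Gamma> \<and> u \<in> fst \<gamma>) else None)"

definition avoids :: "'v polymer set \<Rightarrow> 'v set \<Rightarrow> bool" where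
  "avoids \<Gamma> \<Lambda> \<longleftrightarrow> (\<forall>\<gamma>\<in>\<Gamma>. fst \<gamma> \<inter> \<Lambda> = {})"

definition polymer_sampling_condition ::
  "real \<Rightarrow> nat \<Rightarrow> nat \<Rightarrow> 'v polymer set \<Rightarrow> ('v polymer \<Rightarrow> real) \<Rightarrow> bool" where
  "polymer_sampling_condition C q \<Delta> Cset w \<longleftrightarrow>
     (\<exists>\<theta>. \<theta> \<ge> C * (1 + ln (real (q - 1) * real \<Delta>)) \<and>
          (\<forall>\<gamma>\<in>Cset. w \<gamma> \<le> exp (- \<theta> * real (card (fst \<gamma>)))))"

definition nu :: "'v polymer set \<Rightarrow> ('v polymer \<Rightarrow> real) \<Rightarrow> 'v \<Rightarrow> 'v polymer option pmf" where
  "nu Cset w u = embed_pmf (\<lambda>x. case x of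
       None \<Rightarrow> 1 - (\<Sum>\<gamma>\<in>{\<gamma>\<in>Cset. u \<in> fst \<gamma>}. w \<gamma>)
     | Some \<gamma> \<Rightarrow> (if \<gamma> \<in> Cset \<and> u \<in> fst \<gamma> then w \<gamma> else 0))"

text \<open>MS-polymer as a subprobability distribution (least fixed point; missing mass =
  non-termination). Inl (u, Lambda) is a call MS-polymer(G,u,Lambda,g);
  Inr (vs, Lambda, gamma) is the remaining loop over the vertices vs with current Lambda.\<close>
context
  fixes V :: "'v set" and E :: "'v \<Rightarrow> 'v \<Rightarrow> bool" and Cset :: "'v polymer set"
    and w :: "'v polymer \<Rightarrow> real" and ord :: "'v set \<Rightarrow> 'v list"
begin

partial_function (spmf) ms_aux ::
  "('v \<times> 'v set) + ('v list \<times> 'v set \<times> 'v polymer) \<Rightarrow> 'v polymer option spmf" where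
  "ms_aux x = (case x of
     Inl (u, \<Lambda>) \<Rightarrow>
       (if u \<in> \<Lambda> then return_spmf None else
        bind_spmf (spmf_of_pmf (nu Cset w u)) (\<lambda>go. case go of
          None \<Rightarrow> return_spmf None
        | Some \<gamma> \<Rightarrow>
            (if fst \<gamma> \<inter> \<Lambda> \<noteq> {} then return_spmf None
             else ms_aux (Inr (u # ord (nbhd_plus V E (fst \<gamma>) - {u}), \<Lambda>, \<gamma>)))))
   | Inr (vs, \<Lambda>, \<gamma>) \<Rightarrow>
       (case vs of
          [] \<Rightarrow> return_spmf (Some \<gamma>)
        | v # vs' \<Rightarrow>
            bind_spmf (ms_aux (Inl (v, \<Lambda>))) (\<lambda>g'. case g' of
              None \<Rightarrow> ms_aux (Inr (vs', insert v \<Lambda>, \<gamma>))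
            | Some _ \<Rightarrow> return_spmf None)))"

definition ms_polymer :: "'v \<Rightarrow> 'v set \<Rightarrow> 'v polymer option spmf" where
  "ms_polymer u \<Lambda> = ms_aux (Inl (u, \<Lambda>))"

end

end

theory Submission
  imports Defs
begin

definition Sig :: "'v set \<Rightarrow> ('v \<Rightarrow> nat set) \<Rightarrow> ('v \<Rightarrow> nat) set" where
  "Sig S A = {\<sigma>. (\<forall>x\<in>S. \<sigma> x \<in> A x) \<and> (\<forall>x. x \<notin> S \<longrightarrow> \<sigma> x = 0)}"

lemma Sig_fin_card:
  assumes "finite S" "\<forall>x\<in>S. finite (A x)"
  shows "finite (Sig S A) \<and> card (Sig S A) \<le> (\<Prod>x\<in>S. card (A x))"
proof -
  have inj: "inj_on (\<lambda>\<sigma>. restrict \<sigma> S) (Sig S A)"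
  proof (rule inj_onI)
    fix s t assume s: "s \<in> Sig S A" and t: "t \<in> Sig S A" and eq: "restrict s S = restrict t S"
    show "s = t"
    proof
      fix x show "s x = t x"
      proof (cases "x \<in> S")
        case True then show ?thesis using fun_cong[OF eq, of x] by simp
      next
        case False then show ?thesis using s t by (simp add: Sig_def)
      qed
    qed
  qed
  have sub: "(\<lambda>\<sigma>. restrict \<sigma> S) ` Sig S A \<subseteq> PiE S A"
    by (auto simp: Sig_def)
  have fin: "finite (PiE S A)" using assms by (simp add: finite_PiE)
  have "finite ((\<lambda>\<sigma>. restrict \<sigma> S) ` Sig S A)" using finite_subset[OF sub fin] .
  then have f1: "finite (Sig S A)" using finite_imageD inj by blast
  have "card (Sig S A) = card ((\<lambda>\<sigma>. restrict \<sigma> S) ` Sig S A)" using card_image[OF inj] by simp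
  also have "\<dots> \<le> card (PiE S A)" by (rule card_mono[OF fin sub])
  also have "\<dots> = (\<Prod>x\<in>S. card (A x))" by (simp add: card_PiE assms(1))
  finally show ?thesis using f1 by simp
qed

fun wk :: "'v set \<Rightarrow> ('v \<Rightarrow> 'v \<Rightarrow> bool) \<Rightarrow> nat \<Rightarrow> 'v \<Rightarrow> 'v list set" where
  "wk V E 0 v = {[v]}"
| "wk V E (Suc n) v = (\<Union>y\<in>nbhd V E v. (#) v ` wk V E n y)"

lemma wk_SucI: "y \<in> nbhd V E v \<Longrightarrow> W \<in> wk V E n y \<Longrightarrow> v # W \<in> wk V E (Suc n) v"
  by auto

lemma wk_length: "W \<in> wk V E n v \<Longrightarrow> length W = Suc n"
  by (induction n arbitrary: v W) auto

lemma wk_hd: "W \<in> wk V E n v \<Longrightarrow> v \<in> set W"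
  by (induction n arbitrary: v W) auto

lemma rtrancl_exit:
  assumes "(a, b) \<in> R\<^sup>*" "a \<in> T" "b \<notin> T"
  shows "\<exists>y x. (y, x) \<in> R \<and> y \<in> T \<and> x \<notin> T"
  using assms by (induction rule: rtrancl_induct) blast+

locale PM =
  fixes V :: "'v set" and E :: "'v \<Rightarrow> 'v \<Rightarrow> bool" and q :: nat and g :: "'v \<Rightarrow> nat"
    and Cset :: "'v polymer set" and w :: "'v polymer \<Rightarrow> real" and \<Delta> :: nat and \<theta> :: real
  assumes graph: "simple_graph V E" and Delta: "\<Delta> = max_degree V E" and Delta_pos: "\<Delta> \<ge> 1"
    and q: "q \<ge> 2" and g: "\<forall>v\<in>V. g v \<in> {1..q}" and Cset: "\<forall>\<gamma>\<in>Cset. is_polymer V E q g \<gamma>"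
    and w_nonneg: "\<forall>\<gamma>\<in>Cset. w \<gamma> \<ge> 0"
    and w_le: "\<forall>\<gamma>\<in>Cset. w \<gamma> \<le> exp (- \<theta> * real (card (fst \<gamma>)))"
    and theta: "32 * real (q - 1) * real \<Delta> ^ 2 \<le> exp \<theta>"
begin

lemma finV: "finite V" using graph by (simp add: simple_graph_def)

lemma E_sym: "E x y \<Longrightarrow> E y x" using graph by (simp add: simple_graph_def)
lemma E_V: "E x y \<Longrightarrow> x \<in> V \<and> y \<in> V" using graph by (simp add: simple_graph_def)

lemma nbhd_fin: "finite (nbhd V E x)" using finV by (simp add: nbhd_def)

lemma nbhd_card: "card (nbhd V E x) \<le> \<Delta>"
proof (cases "x \<in> V")
  case True
  then show ?thesis unfolding Delta max_degree_def using finV by (intro Max_ge) auto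
next
  case False
  then have "nbhd V E x = {}" using E_V by (auto simp: nbhd_def)
  then show ?thesis by simp
qed

lemma polyD: "\<gamma> \<in> Cset \<Longrightarrow> fst \<gamma> \<subseteq> V \<and> connected_set E (fst \<gamma>) \<and>
     (\<forall>x\<in>fst \<gamma>. snd \<gamma> x \<in> {1..q} - {g x}) \<and> (\<forall>x. x \<notin> fst \<gamma> \<longrightarrow> snd \<gamma> x = 0)"
  using Cset by (simp add: is_polymer_def)

lemma fin_Cset: "finite Cset"
proof -
  have "Cset \<subseteq> Pow V \<times> Sig V (\<lambda>_. {0..q})"
  proof
    fix \<gamma> assume a: "\<gamma> \<in> Cset"
    have P: "fst \<gamma> \<subseteq> V" "\<forall>x\<in>fst \<gamma>. snd \<gamma> x \<in> {1..q} - {g x}" "\<forall>x. x \<notin> fst \<gamma> \<longrightarrow> snd \<gamma> x = 0"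
      using polyD[OF a] by auto
    have "snd \<gamma> \<in> Sig V (\<lambda>_. {0..q})"
      unfolding Sig_def
    proof (intro CollectI conjI ballI allI impI)
      fix x assume "x \<in> V"
      show "snd \<gamma> x \<in> {0..q}"
      proof (cases "x \<in> fst \<gamma>")
        case True then show ?thesis using P(2) by auto
      next
        case False then show ?thesis using P(3) by auto
      qed
    next
      fix x assume "x \<notin> V" then show "snd \<gamma> x = 0" using P(1,3) by auto
    qed
    then show "\<gamma> \<in> Pow V \<times> Sig V (\<lambda>_. {0..q})" using P(1) by (cases \<gamma>) auto
  qed
  moreover have "finite (Sig V (\<lambda>_. {0..q}))" using Sig_fin_card[of V "\<lambda>_. {0..q}"] finV by simp
  ultimately show ?thesis using finV by (meson finite_Pow_iff finite_SigmaI finite_subset)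
qed

lemma wk_fin_card: "finite (wk V E n v) \<and> card (wk V E n v) \<le> \<Delta> ^ n"
proof (induction n arbitrary: v)
  case 0 then show ?case by simp
next
  case (Suc n)
  have fin: "finite (wk V E (Suc n) v)" using Suc nbhd_fin by (simp add: wk.simps(2))
  have "card (wk V E (Suc n) v) \<le> (\<Sum>y\<in>nbhd V E v. card ((#) v ` wk V E n y))"
    by (simp add: card_UN_le nbhd_fin wk.simps(2))
  also have "\<dots> \<le> (\<Sum>y\<in>nbhd V E v. \<Delta> ^ n)"
    by (intro sum_mono) (metis Suc card_image_le order_trans)
  also have "\<dots> \<le> \<Delta> * \<Delta> ^ n" using nbhd_card by simp
  finally show ?case using fin by simp
qed

lemma wk_SucE: "W \<in> wk V E (Suc n) v \<Longrightarrow> \<exists>y W1. y \<in> nbhd V E v \<and> W1 \<in> wk V E n y \<and> W = v # W1"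
  by auto

declare wk.simps(2)[simp del]

lemma nbhd_both: "E y x \<Longrightarrow> x \<in> nbhd V E y \<and> y \<in> nbhd V E x"
  using E_V[of y x] E_sym[of y x] by (simp add: nbhd_def)

lemma wk_extend:
  assumes "W \<in> wk V E n v" "y \<in> set W" "E y x"
  shows "\<exists>W'\<in>wk V E (Suc (Suc n)) v. set W' = insert x (set W)"
  using assms
proof (induction n arbitrary: v W)
  case 0
  then have W: "W = [v]" "y = v" by auto
  have "x \<in> nbhd V E v" "v \<in> nbhd V E x" using 0 W nbhd_both by auto
  then have "[v, x, v] \<in> wk V E (Suc (Suc 0)) v" by (metis wk_SucI wk.simps(1) singletonI)
  then show ?case using W by (intro bexI[of _ "[v,x,v]"]) auto
next
  case (Suc n)
  then obtain z W1 where z: "z \<in> nbhd V E v" "W1 \<in> wk V E n z" "W = v # W1"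
    using wk_SucE by blast
  show ?case
  proof (cases "y = v")
    case True
    have "x \<in> nbhd V E v" "v \<in> nbhd V E x" using Suc True nbhd_both by auto
    moreover have "W \<in> wk V E (Suc n) v" using Suc by simp
    ultimately have "v # x # W \<in> wk V E (Suc (Suc (Suc n))) v" by (metis wk_SucI)
    then show ?thesis using z by (intro bexI[of _ "v # x # W"]) auto
  next
    case False
    then have "y \<in> set W1" using Suc z by auto
    then obtain W1' where "W1' \<in> wk V E (Suc (Suc n)) z" "set W1' = insert x (set W1)"
      using Suc.IH[OF z(2)] Suc.prems by blast
    moreover have "v # W1' \<in> wk V E (Suc (Suc (Suc n))) v" using wk_SucI[OF z(1) calculation(1)] .
    ultimately show ?thesis using z by (intro bexI[of _ "v # W1'"]) auto
  qed
qed

lemma cover: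
  assumes S: "connected_set E S" "S \<subseteq> V" "v \<in> S"
  shows "\<exists>n W. W \<in> wk V E n v \<and> set W = S \<and> n \<le> 2 * (card S - 1)"
proof -
  have finS: "finite S" using S finV finite_subset by blast
  have main: "\<And>T. T \<subseteq> S \<Longrightarrow> v \<in> T \<Longrightarrow> card (S - T) = k \<Longrightarrow>
      (\<exists>n W. W \<in> wk V E n v \<and> set W = T \<and> n \<le> 2 * (card T - 1)) \<Longrightarrow>
      (\<exists>n W. W \<in> wk V E n v \<and> set W = S \<and> n \<le> 2 * (card S - 1))" for k
  proof (induction k)
    case 0
    then have "S - T = {}" using finS by simp
    then have "T = S" using 0 by blast
    then show ?case using 0 by blast
  next
    case (Suc k)
    have "S - T \<noteq> {}" using Suc.prems(3) by (metis card.empty nat.distinct(1))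
    then obtain z where z: "z \<in> S" "z \<notin> T" by blast
    have "(v, z) \<in> (Restr {(a, b). E a b} S)\<^sup>*" using S(1) z(1) S(3) unfolding connected_set_def by blast
    then obtain y x where yx: "(y, x) \<in> Restr {(a, b). E a b} S" "y \<in> T" "x \<notin> T"
      using rtrancl_exit[OF _ Suc.prems(2) z(2)] by blast
    obtain n W where W: "W \<in> wk V E n v" "set W = T" "n \<le> 2 * (card T - 1)" using Suc.prems by blast
    obtain W' where W': "W' \<in> wk V E (Suc (Suc n)) v" "set W' = insert x T"
      using wk_extend[OF W(1), of y x] yx W(2) by auto
    have finT: "finite T" using Suc.prems(1) finS finite_subset by blast
    have cT: "card (insert x T) = Suc (card T)" using finT yx by simp
    have cT1: "card T \<ge> 1" using finT Suc.prems(2) by (metis One_nat_def Suc_leI card_gt_0_iff empty_iff)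
    have xST: "x \<in> S - T" using yx by auto
    have "S - insert x T = (S - T) - {x}" by auto
    then have "card (S - insert x T) = card (S - T) - 1" using xST finS by (simp add: card_Diff_singleton)
    then have c3: "card (S - insert x T) = k" using Suc.prems(3) by simp
    have c1: "insert x T \<subseteq> S" using yx Suc.prems(1) by auto
    have "Suc (Suc n) \<le> 2 * (card (insert x T) - 1)" using W(3) cT cT1 by simp
    then have c4: "\<exists>n W. W \<in> wk V E n v \<and> set W = insert x T \<and> n \<le> 2 * (card (insert x T) - 1)"
      using W' by blast
    have c2: "v \<in> insert x T" using Suc.prems(2) by simp
    from Suc.IH[OF c1 c2 c3 c4] show ?case .
  qed
  have "[v] \<in> wk V E 0 v" by simp
  then have "\<exists>n W. W \<in> wk V E n v \<and> set W = {v} \<and> n \<le> 2 * (card {v} - 1)" by force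
  from main[OF _ _ refl this] S(3) show ?thesis by simp
qed

end

lemma geo_le:
  fixes x :: real assumes "0 \<le> x" "x \<le> 1/4"
  shows "(\<Sum>i<n. x ^ i) \<le> 4/3"
proof -
  have "x \<noteq> 1" using assms by auto
  then have "(\<Sum>i<n. x ^ i) = (1 - x ^ n) / (1 - x)" by (simp add: sum_gp_strict)
  also have "\<dots> \<le> 1 / (1 - x)" using assms by (intro divide_right_mono) auto
  also have "\<dots> \<le> 4/3" using assms by (simp add: field_simps)
  finally show ?thesis .
qed

context PM begin

definition CS :: "'v \<Rightarrow> 'v set set" where
  "CS v = {S. S \<subseteq> V \<and> connected_set E S \<and> v \<in> S}"

lemma CS_fin: "finite (CS v)"
proof -
  have "CS v \<subseteq> Pow V" by (auto simp: CS_def)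
  then show ?thesis using finV finite_subset by blast
qed

lemma CS_sum:
  fixes c :: real
  assumes c: "0 \<le> c" "c \<le> 1" "real \<Delta> * c \<le> 1/4"
  shows "(\<Sum>S\<in>CS v. (c^2) ^ card S) \<le> 2 * c^2"
proof -
  define N where "N = 2 * card V"
  define WA where "WA = (\<Union>n\<in>{..<Suc N}. wk V E n v)"
  define Wf where "Wf S = (SOME W. \<exists>n. W \<in> wk V E n v \<and> set W = S \<and> n \<le> 2 * (card S - 1))" for S
  have Wf: "\<exists>n. Wf S \<in> wk V E n v \<and> set (Wf S) = S \<and> n \<le> 2 * (card S - 1)" if "S \<in> CS v" for S
  proof -
    have "\<exists>W n. W \<in> wk V E n v \<and> set W = S \<and> n \<le> 2 * (card S - 1)"
    proof -
      have h: "S \<subseteq> V" "connected_set E S" "v \<in> S" using that by (auto simp: CS_def)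
      from cover[OF h(2,1,3)] show ?thesis by blast
    qed
    then have "\<exists>W. \<exists>n. W \<in> wk V E n v \<and> set W = S \<and> n \<le> 2 * (card S - 1)" by blast
    then show ?thesis unfolding Wf_def by (rule someI_ex)
  qed
  have inj: "inj_on Wf (CS v)"
  proof (rule inj_onI)
    fix S T assume "S \<in> CS v" "T \<in> CS v" "Wf S = Wf T"
    then show "S = T" using Wf by metis
  qed
  have sub: "Wf ` CS v \<subseteq> WA"
  proof
    fix W assume "W \<in> Wf ` CS v"
    then obtain S where S: "S \<in> CS v" "W = Wf S" by blast
    then obtain n where n: "W \<in> wk V E n v" "n \<le> 2 * (card S - 1)" using Wf by blast
    have "card S \<le> card V" using S finV by (intro card_mono) (auto simp: CS_def)
    then have "n < Suc N" using n unfolding N_def by simp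
    then show "W \<in> WA" using n unfolding WA_def by blast
  qed
  have finWA: "finite WA" unfolding WA_def using wk_fin_card by blast
  have step1: "(c^2) ^ card S \<le> c * c ^ length (Wf S)" if S: "S \<in> CS v" for S
  proof -
    obtain n where n: "Wf S \<in> wk V E n v" "n \<le> 2 * (card S - 1)" using Wf[OF S] by blast
    have finS: "finite S" using S finV finite_subset by (auto simp: CS_def)
    have "card S \<ge> 1" using S finS by (auto simp: CS_def Suc_le_eq card_gt_0_iff)
    then have k: "2 * card S = Suc (2 * card S - 1)" "Suc n \<le> 2 * card S - 1" using n by auto
    have "(c^2) ^ card S = c ^ (2 * card S)" by (simp add: power_mult)
    also have "\<dots> = c * c ^ (2 * card S - 1)" using k(1) by (metis power_Suc)
    also have "\<dots> \<le> c * c ^ (Suc n)" using c k(2) by (intro mult_left_mono power_decreasing) auto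
    finally show ?thesis using wk_length[OF n(1)] by simp
  qed
  have "(\<Sum>S\<in>CS v. (c^2) ^ card S) \<le> (\<Sum>S\<in>CS v. c * c ^ length (Wf S))"
    using step1 by (intro sum_mono) auto
  also have "\<dots> = c * (\<Sum>W\<in>Wf ` CS v. c ^ length W)"
    by (simp add: sum_distrib_left sum.reindex[OF inj])
  also have "\<dots> \<le> c * (\<Sum>W\<in>WA. c ^ length W)"
    using c sub finWA by (intro mult_left_mono sum_mono2) auto
  also have "(\<Sum>W\<in>WA. c ^ length W) = (\<Sum>n<Suc N. (\<Sum>W\<in>wk V E n v. c ^ length W))"
    unfolding WA_def
  proof (rule sum.UNION_disjoint)
    show "finite {..<Suc N}" by simp
    show "\<forall>i\<in>{..<Suc N}. finite (wk V E i v)" using wk_fin_card by blast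
    show "\<forall>i\<in>{..<Suc N}. \<forall>j\<in>{..<Suc N}. i \<noteq> j \<longrightarrow> wk V E i v \<inter> wk V E j v = {}"
    proof (intro ballI impI)
      fix i j :: nat assume "i \<noteq> j"
      then show "wk V E i v \<inter> wk V E j v = {}" using wk_length by (metis disjoint_iff nat.inject)
    qed
  qed
  also have "\<dots> = (\<Sum>n<Suc N. real (card (wk V E n v)) * c ^ Suc n)"
    by (intro sum.cong refl) (simp add: wk_length)
  also have "\<dots> \<le> (\<Sum>n<Suc N. real \<Delta> ^ n * c ^ Suc n)"
    using c wk_fin_card by (intro sum_mono mult_right_mono) (auto simp flip: of_nat_power)
  also have "\<dots> = c * (\<Sum>n<Suc N. (real \<Delta> * c) ^ n)"
    unfolding sum_distrib_left by (intro sum.cong refl) (simp add: power_mult_distrib mult_ac)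
  also have "\<dots> \<le> c * (4/3)"
    using c by (intro mult_left_mono geo_le) auto
  finally have "(\<Sum>S\<in>CS v. (c^2) ^ card S) \<le> c * (c * (4/3))" using c by (simp add: mult_left_mono)
  also have "\<dots> \<le> 2 * c^2" using c by (simp add: power2_eq_square)
  finally show ?thesis .
qed

end

context PM begin

definition CU :: "'v \<Rightarrow> 'v polymer set" where
  "CU v = {\<gamma>\<in>Cset. v \<in> fst \<gamma>}"

lemma CU_fin: "finite (CU v)" using fin_Cset by (simp add: CU_def)

lemma nplus_card: "finite S \<Longrightarrow> card (nbhd_plus V E S) \<le> (\<Delta> + 1) * card S"
proof -
  assume fS: "finite S"
  have "card (nbhd_plus V E S) \<le> (\<Sum>x\<in>S. card (insert x (nbhd V E x)))"
    unfolding nbhd_plus_def by (rule card_UN_le[OF fS])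
  also have "\<dots> \<le> (\<Sum>x\<in>S. \<Delta> + 1)"
  proof (rule sum_mono)
    fix x show "card (insert x (nbhd V E x)) \<le> \<Delta> + 1"
    proof -
      have "card (insert x (nbhd V E x)) \<le> Suc (card (nbhd V E x))" by (simp add: card_insert_if nbhd_fin)
      then show ?thesis using nbhd_card[of x] by simp
    qed
  qed
  finally show ?thesis by (simp add: algebra_simps)
qed

lemma nplus_fin: "finite S \<Longrightarrow> finite (nbhd_plus V E S)"
  unfolding nbhd_plus_def using nbhd_fin by auto

lemma m_bound: "(\<Sum>\<gamma>\<in>CU v. w \<gamma> * (1 + real (card (nbhd_plus V E (fst \<gamma>))))) \<le> 1/2"
proof -
  define c :: real where "c = 1 / (4 * real \<Delta>)"
  have D1: "real \<Delta> \<ge> 1" using Delta_pos by simp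
  have c: "0 \<le> c" "c \<le> 1" "real \<Delta> * c \<le> 1/4" using D1 by (auto simp: c_def field_simps)
  define e where "e = exp (- \<theta>)"
  have e0: "e > 0" by (simp add: e_def)
  have q1: "real (q - 1) \<ge> 1" using q by simp
  have ce: "2 * real (q - 1) * e \<le> c^2"
  proof -
    have "2 * real (q - 1) * e = 2 * real (q - 1) / exp \<theta>" by (simp add: e_def exp_minus field_simps)
    also have "\<dots> \<le> 2 * real (q - 1) / (32 * real (q - 1) * real \<Delta> ^ 2)"
      using theta q1 D1 by (intro divide_left_mono) auto
    also have "\<dots> = c^2" using q1 D1 by (simp add: c_def field_simps power2_eq_square)
    finally show ?thesis .
  qed
  define h :: "nat \<Rightarrow> real" where "h k = e ^ k * (1 + (real \<Delta> + 1) * real k)" for k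
  have h0: "h k \<ge> 0" for k using e0 by (simp add: h_def)
  have Sg: "Sig S (\<lambda>x. {1..q} - {g x}) = Sig S (\<lambda>x. {1..q} - {g x})" for S ..
  define SG where "SG S = Sig S (\<lambda>x. {1..q} - {g x})" for S
  have SGfc: "finite (SG S) \<and> real (card (SG S)) \<le> real (q - 1) ^ card S" if "S \<in> CS v" for S
  proof -
    have fS: "finite S" "S \<subseteq> V" using that finV finite_subset by (auto simp: CS_def)
    have "finite (SG S) \<and> card (SG S) \<le> (\<Prod>x\<in>S. card ({1..q} - {g x}))"
      unfolding SG_def by (rule Sig_fin_card) (use fS in auto)
    moreover have "(\<Prod>x\<in>S. card ({1..q} - {g x})) = (q - 1) ^ card S"
    proof -
      have "card ({1..q} - {g x}) = q - 1" if "x \<in> S" for x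
        using g that fS by (subst card_Diff_singleton) auto
      then show ?thesis by simp
    qed
    ultimately have "finite (SG S)" "card (SG S) \<le> (q - 1) ^ card S" by auto
    then show ?thesis by (simp flip: of_nat_power)
  qed
  have step1: "w \<gamma> * (1 + real (card (nbhd_plus V E (fst \<gamma>)))) \<le> h (card (fst \<gamma>))"
    if "\<gamma> \<in> CU v" for \<gamma>
  proof -
    have gC: "\<gamma> \<in> Cset" using that by (simp add: CU_def)
    have fS: "finite (fst \<gamma>)" using finite_subset[OF conjunct1[OF polyD[OF gC]] finV] .
    define k where "k = card (fst \<gamma>)"
    have "real (card (nbhd_plus V E (fst \<gamma>))) \<le> real ((\<Delta> + 1) * k)"
      using nplus_card[OF fS] unfolding k_def by (simp only: of_nat_le_iff)
    then have b: "1 + real (card (nbhd_plus V E (fst \<gamma>))) \<le> 1 + (real \<Delta> + 1) * real k" by (simp add: algebra_simps)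
    have ek: "e ^ k = exp (- \<theta> * real k)"
    proof -
      have "e ^ k = exp (real k * (- \<theta>))" unfolding e_def by (rule exp_of_nat_mult[symmetric])
      also have "real k * (- \<theta>) = - \<theta> * real k" by simp
      finally show ?thesis .
    qed
    have a: "w \<gamma> \<le> e ^ k" using w_le gC ek unfolding k_def by simp
    have c0: "0 \<le> e ^ k" using e0 by simp
    have d0: "0 \<le> 1 + real (card (nbhd_plus V E (fst \<gamma>)))" by simp
    from mult_mono[OF a b c0 d0] show ?thesis unfolding h_def k_def .
  qed
  have sub: "CU v \<subseteq> Sigma (CS v) SG"
  proof
    fix \<gamma> assume a: "\<gamma> \<in> CU v"
    then have gC: "\<gamma> \<in> Cset" "v \<in> fst \<gamma>" by (auto simp: CU_def)
    note P = polyD[OF gC(1)]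
    have "fst \<gamma> \<in> CS v" using P gC by (simp add: CS_def)
    moreover have "snd \<gamma> \<in> SG (fst \<gamma>)" using P by (simp add: SG_def Sig_def)
    ultimately show "\<gamma> \<in> Sigma (CS v) SG" by (cases \<gamma>) auto
  qed
  have finSig: "finite (Sigma (CS v) SG)" using CS_fin SGfc by (intro finite_SigmaI) auto
  have "(\<Sum>\<gamma>\<in>CU v. w \<gamma> * (1 + real (card (nbhd_plus V E (fst \<gamma>))))) \<le> (\<Sum>\<gamma>\<in>CU v. h (card (fst \<gamma>)))"
    using step1 by (intro sum_mono) auto
  also have "\<dots> \<le> (\<Sum>\<gamma>\<in>Sigma (CS v) SG. h (card (fst \<gamma>)))"
    using sub finSig h0 by (intro sum_mono2) auto
  also have "\<dots> = (\<Sum>S\<in>CS v. real (card (SG S)) * h (card S))"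
  proof -
    have "(\<Sum>\<gamma>\<in>Sigma (CS v) SG. h (card (fst \<gamma>))) = (\<Sum>S\<in>CS v. \<Sum>\<sigma>\<in>SG S. h (card S))"
      using sum.Sigma[of "CS v" SG "\<lambda>S \<sigma>. h (card S)", OF CS_fin] SGfc by (simp add: split_def)
    then show ?thesis by simp
  qed
  also have "\<dots> \<le> (\<Sum>S\<in>CS v. real (q - 1) ^ card S * h (card S))"
    using SGfc h0 by (intro sum_mono mult_right_mono) auto
  also have "\<dots> \<le> (\<Sum>S\<in>CS v. 3 * real \<Delta> * (c^2) ^ card S)"
  proof (rule sum_mono)
    fix S assume S: "S \<in> CS v"
    define k where "k = card S"
    have fS: "finite S" using S finV finite_subset by (auto simp: CS_def)
    have k1: "k \<ge> 1" using S fS by (auto simp: CS_def k_def Suc_le_eq card_gt_0_iff)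
    have "real k \<le> 2 ^ k" using less_exp[of k] by (metis less_imp_le of_nat_le_iff of_nat_numeral of_nat_power)
    then have a: "1 + (real \<Delta> + 1) * real k \<le> 3 * real \<Delta> * 2 ^ k"
    proof -
      assume kk: "real k \<le> 2 ^ k"
      have k1': "real k \<ge> 1" using k1 by simp
      have m1: "real \<Delta> * real k \<ge> 1" using mult_mono[OF D1 k1'] by simp
      have m2: "real k \<le> real \<Delta> * real k" using mult_right_mono[OF D1, of "real k"] by simp
      have "1 + (real \<Delta> + 1) * real k \<le> 3 * real \<Delta> * real k" using m1 m2
        by (simp add: algebra_simps)
      also have "\<dots> \<le> 3 * real \<Delta> * 2 ^ k" using kk D1 by simp
      finally show ?thesis .
    qed
    have "real (q - 1) ^ k * h k = (real (q - 1) * e) ^ k * (1 + (real \<Delta> + 1) * real k)"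
      by (simp add: h_def power_mult_distrib)
    also have "\<dots> \<le> (real (q - 1) * e) ^ k * (3 * real \<Delta> * 2 ^ k)"
      using a e0 by (intro mult_left_mono) auto
    also have "\<dots> = 3 * real \<Delta> * (2 * real (q - 1) * e) ^ k"
      by (simp add: power_mult_distrib)
    also have "\<dots> \<le> 3 * real \<Delta> * (c^2) ^ k"
      using ce e0 by (intro mult_left_mono power_mono) auto
    finally show "real (q - 1) ^ card S * h (card S) \<le> 3 * real \<Delta> * (c^2) ^ card S"
      by (simp add: k_def)
  qed
  also have "\<dots> = 3 * real \<Delta> * (\<Sum>S\<in>CS v. (c^2) ^ card S)" by (simp add: sum_distrib_left)
  also have "\<dots> \<le> 3 * real \<Delta> * (2 * c^2)" using CS_sum[OF c] D1 by (intro mult_left_mono) auto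
  also have "\<dots> \<le> 1/2" using D1 by (simp add: c_def field_simps power2_eq_square)
  finally show ?thesis .
qed

end

context PM begin

abbreviation PC where "PC \<equiv> poly_configs E Cset"

definition Z :: "'v set \<Rightarrow> real" where
  "Z \<Lambda> = (\<Sum>\<Gamma>\<in>{\<Gamma>\<in>PC. avoids \<Gamma> \<Lambda>}. poly_weight w \<Gamma>)"

lemma PC_fin: "finite PC"
proof -
  have "PC \<subseteq> Pow Cset" by (auto simp: poly_configs_def)
  then show ?thesis using fin_Cset finite_subset by blast
qed

lemma PC_sub: "\<Gamma> \<in> PC \<Longrightarrow> \<Gamma> \<subseteq> Cset" by (simp add: poly_configs_def)

lemma W_nonneg: "\<Gamma> \<in> PC \<Longrightarrow> 0 \<le> poly_weight w \<Gamma>"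
  unfolding poly_weight_def using PC_sub w_nonneg by (intro prod_nonneg) auto

lemma Z_ge1: "1 \<le> Z \<Lambda>"
proof -
  have e: "{} \<in> {\<Gamma>\<in>PC. avoids \<Gamma> \<Lambda>}" by (simp add: poly_configs_def avoids_def)
  have "poly_weight w {} \<le> Z \<Lambda>" unfolding Z_def
    by (rule member_le_sum[OF e]) (use W_nonneg PC_fin in auto)
  then show ?thesis by (simp add: poly_weight_def)
qed

lemma Z_mono: "\<Lambda> \<subseteq> \<Lambda>' \<Longrightarrow> Z \<Lambda>' \<le> Z \<Lambda>"
  unfolding Z_def using PC_fin W_nonneg by (intro sum_mono2) (auto simp: avoids_def)

definition muL :: "'v set \<Rightarrow> 'v polymer set pmf" where
  "muL \<Lambda> = embed_pmf (\<lambda>\<Gamma>. if \<Gamma> \<in> PC \<and> avoids \<Gamma> \<Lambda> then poly_weight w \<Gamma> / Z \<Lambda> else 0)"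

lemma pmf_muL: "pmf (muL \<Lambda>) \<Gamma> = (if \<Gamma> \<in> PC \<and> avoids \<Gamma> \<Lambda> then poly_weight w \<Gamma> / Z \<Lambda> else 0)"
  unfolding muL_def
proof (rule pmf_embed_pmf)
  have Z0: "Z \<Lambda> > 0" using Z_ge1[of \<Lambda>] by simp
  show "0 \<le> (if \<Gamma> \<in> PC \<and> avoids \<Gamma> \<Lambda> then poly_weight w \<Gamma> / Z \<Lambda> else 0)" for \<Gamma>
    using W_nonneg Z0 by auto
  let ?A = "{\<Gamma>\<in>PC. avoids \<Gamma> \<Lambda>}"
  have "(\<integral>\<^sup>+ x. ennreal (if x \<in> PC \<and> avoids x \<Lambda> then poly_weight w x / Z \<Lambda> else 0) \<partial>count_space UNIV)
      = (\<Sum>x\<in>?A. ennreal (if x \<in> PC \<and> avoids x \<Lambda> then poly_weight w x / Z \<Lambda> else 0))"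
    by (rule nn_integral_count_space') (use PC_fin in auto)
  also have "\<dots> = ennreal (\<Sum>x\<in>?A. poly_weight w x / Z \<Lambda>)"
    using W_nonneg Z0 by (subst sum_ennreal) auto
  also have "(\<Sum>x\<in>?A. poly_weight w x / Z \<Lambda>) = 1"
    using Z0 by (simp add: sum_divide_distrib[symmetric] Z_def)
  finally show "(\<integral>\<^sup>+ x. ennreal (if x \<in> PC \<and> avoids x \<Lambda> then poly_weight w x / Z \<Lambda> else 0) \<partial>count_space UNIV) = 1"
    by simp
qed

lemma set_muL: "set_pmf (muL \<Lambda>) \<subseteq> {\<Gamma>\<in>PC. avoids \<Gamma> \<Lambda>}"
  by (auto simp: set_pmf_iff pmf_muL split: if_splits)

lemma measure_muL:
  "measure_pmf.prob (muL \<Lambda>) A = (\<Sum>\<Gamma>\<in>{\<Gamma>\<in>PC. avoids \<Gamma> \<Lambda> \<and> \<Gamma> \<in> A}. poly_weight w \<Gamma>) / Z \<Lambda>"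
proof -
  have fin: "finite {\<Gamma>\<in>PC. avoids \<Gamma> \<Lambda> \<and> \<Gamma> \<in> A}" using PC_fin by simp
  have "measure_pmf.prob (muL \<Lambda>) A = measure_pmf.prob (muL \<Lambda>) (A \<inter> set_pmf (muL \<Lambda>))"
    by (simp add: measure_Int_set_pmf)
  also have "\<dots> = sum (pmf (muL \<Lambda>)) (A \<inter> set_pmf (muL \<Lambda>))"
    by (rule measure_measure_pmf_finite) (use finite_subset[OF _ PC_fin] set_muL in blast)
  also have "\<dots> = sum (pmf (muL \<Lambda>)) {\<Gamma>\<in>PC. avoids \<Gamma> \<Lambda> \<and> \<Gamma> \<in> A}"
    by (rule sum.mono_neutral_left) (use fin set_muL in \<open>auto simp: set_pmf_iff\<close>)
  also have "\<dots> = (\<Sum>\<Gamma>\<in>{\<Gamma>\<in>PC. avoids \<Gamma> \<Lambda> \<and> \<Gamma> \<in> A}. poly_weight w \<Gamma> / Z \<Lambda>)"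
    by (intro sum.cong refl) (simp add: pmf_muL)
  finally show ?thesis by (simp add: sum_divide_distrib)
qed

lemma PC_disj:
  assumes "\<Gamma> \<in> PC" "\<gamma>1 \<in> \<Gamma>" "\<gamma>2 \<in> \<Gamma>" "x \<in> fst \<gamma>1" "x \<in> fst \<gamma>2"
  shows "\<gamma>1 = \<gamma>2"
  using assms unfolding poly_configs_def compatible_def by blast

lemma poly_at_Some:
  assumes "\<Gamma> \<in> PC" "\<gamma> \<in> \<Gamma>" "u \<in> fst \<gamma>"
  shows "poly_at \<Gamma> u = Some \<gamma>"
proof -
  have "(THE \<gamma>'. \<gamma>' \<in> \<Gamma> \<and> u \<in> fst \<gamma>') = \<gamma>"
    by (rule the_equality) (use assms PC_disj in blast)+
  then show ?thesis using assms unfolding poly_at_def by auto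
qed

lemma poly_at_SomeD:
  assumes "\<Gamma> \<in> PC" "poly_at \<Gamma> u = Some \<gamma>"
  shows "\<gamma> \<in> \<Gamma> \<and> u \<in> fst \<gamma>"
proof -
  from assms obtain \<gamma>' where g: "\<gamma>' \<in> \<Gamma>" "u \<in> fst \<gamma>'" unfolding poly_at_def by (auto split: if_splits)
  then have "poly_at \<Gamma> u = Some \<gamma>'" using poly_at_Some assms(1) by blast
  then show ?thesis using g assms(2) by simp
qed

lemma poly_at_None: "poly_at \<Gamma> u = None \<longleftrightarrow> (\<forall>\<gamma>\<in>\<Gamma>. u \<notin> fst \<gamma>)"
  by (auto simp: poly_at_def)

lemma Z_None: "(\<Sum>\<Gamma>\<in>{\<Gamma>\<in>PC. avoids \<Gamma> \<Lambda> \<and> poly_at \<Gamma> u = None}. poly_weight w \<Gamma>) = Z (insert u \<Lambda>)"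
proof -
  have "{\<Gamma>\<in>PC. avoids \<Gamma> \<Lambda> \<and> poly_at \<Gamma> u = None} = {\<Gamma>\<in>PC. avoids \<Gamma> (insert u \<Lambda>)}"
    by (auto simp: avoids_def poly_at_None)
  then show ?thesis by (simp add: Z_def)
qed

lemma fst_sub_nplus: "fst \<delta> \<subseteq> nbhd_plus V E (fst \<delta>)"
  by (auto simp: nbhd_plus_def)

lemma Z_Some:
  "(\<Sum>\<Gamma>\<in>{\<Gamma>\<in>PC. avoids \<Gamma> \<Lambda> \<and> poly_at \<Gamma> u = Some \<delta>}. poly_weight w \<Gamma>) =
     (if \<delta> \<in> Cset \<and> u \<in> fst \<delta> \<and> fst \<delta> \<inter> \<Lambda> = {} then w \<delta> * Z (\<Lambda> \<union> nbhd_plus V E (fst \<delta>)) else 0)"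
proof (cases "\<delta> \<in> Cset \<and> u \<in> fst \<delta> \<and> fst \<delta> \<inter> \<Lambda> = {}")
  case False
  have E0: "{\<Gamma>\<in>PC. avoids \<Gamma> \<Lambda> \<and> poly_at \<Gamma> u = Some \<delta>} = {}"
  proof (rule ccontr)
    assume "{\<Gamma>\<in>PC. avoids \<Gamma> \<Lambda> \<and> poly_at \<Gamma> u = Some \<delta>} \<noteq> {}"
    then obtain \<Gamma> where G: "\<Gamma> \<in> PC" "avoids \<Gamma> \<Lambda>" "poly_at \<Gamma> u = Some \<delta>" by blast
    then have "\<delta> \<in> \<Gamma>" "u \<in> fst \<delta>" using poly_at_SomeD by auto
    then show False using False G PC_sub unfolding avoids_def by blast
  qed
  have "\<not> (\<delta> \<in> Cset \<and> u \<in> fst \<delta> \<and> fst \<delta> \<inter> \<Lambda> = {})" using False .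
  then show ?thesis unfolding E0 by (simp only: if_False sum.empty)
next
  case True
  define N where "N = nbhd_plus V E (fst \<delta>)"
  have dN: "fst \<delta> \<subseteq> N" unfolding N_def by (rule fst_sub_nplus)
  have dne: "fst \<delta> \<noteq> {}" using polyD True connected_set_def by blast
  let ?B = "{\<Gamma>'\<in>PC. avoids \<Gamma>' (\<Lambda> \<union> N)}"
  have notin: "\<delta> \<notin> \<Gamma>'" if "\<Gamma>' \<in> ?B" for \<Gamma>'
  proof
    assume "\<delta> \<in> \<Gamma>'"
    then have "fst \<delta> \<inter> N = {}" using that unfolding avoids_def by blast
    then show False using dN dne by blast
  qed
  have inN: "y \<in> N" if "x \<in> fst \<delta>" "y = x \<or> (y \<in> V \<and> E x y)" for x y
    using that unfolding N_def nbhd_plus_def nbhd_def by blast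
  have seteq: "{\<Gamma>\<in>PC. avoids \<Gamma> \<Lambda> \<and> poly_at \<Gamma> u = Some \<delta>} = insert \<delta> ` ?B"
  proof
    show "{\<Gamma>\<in>PC. avoids \<Gamma> \<Lambda> \<and> poly_at \<Gamma> u = Some \<delta>} \<subseteq> insert \<delta> ` ?B"
    proof
      fix \<Gamma> assume "\<Gamma> \<in> {\<Gamma>\<in>PC. avoids \<Gamma> \<Lambda> \<and> poly_at \<Gamma> u = Some \<delta>}"
      then have G: "\<Gamma> \<in> PC" "avoids \<Gamma> \<Lambda>" "poly_at \<Gamma> u = Some \<delta>" by auto
      have dG: "\<delta> \<in> \<Gamma>" using poly_at_SomeD[OF G(1,3)] by simp
      have "\<Gamma> - {\<delta>} \<in> PC" using G(1) by (auto simp: poly_configs_def)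
      moreover have "avoids (\<Gamma> - {\<delta>}) (\<Lambda> \<union> N)"
        unfolding avoids_def
      proof
        fix \<gamma> assume g: "\<gamma> \<in> \<Gamma> - {\<delta>}"
        have c: "compatible E \<delta> \<gamma>" using G(1) dG g unfolding poly_configs_def by auto
        have "fst \<gamma> \<inter> N = {}"
        proof (rule ccontr)
          assume "fst \<gamma> \<inter> N \<noteq> {}"
          then obtain y where y: "y \<in> fst \<gamma>" "y \<in> N" by blast
          then obtain x where x: "x \<in> fst \<delta>" "y = x \<or> (y \<in> V \<and> E x y)"
            unfolding N_def nbhd_plus_def nbhd_def by blast
          then show False using c y unfolding compatible_def by blast
        qed
        moreover have "fst \<gamma> \<inter> \<Lambda> = {}" using G(2) g unfolding avoids_def by blast
        ultimately show "fst \<gamma> \<inter> (\<Lambda> \<union> N) = {}" by blast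
      qed
      ultimately have "\<Gamma> - {\<delta>} \<in> ?B" by simp
      moreover have "\<Gamma> = insert \<delta> (\<Gamma> - {\<delta>})" using dG by blast
      ultimately show "\<Gamma> \<in> insert \<delta> ` ?B" by blast
    qed
  next
    show "insert \<delta> ` ?B \<subseteq> {\<Gamma>\<in>PC. avoids \<Gamma> \<Lambda> \<and> poly_at \<Gamma> u = Some \<delta>}"
    proof
      fix \<Gamma> assume "\<Gamma> \<in> insert \<delta> ` ?B"
      then obtain \<Gamma>' where G': "\<Gamma>' \<in> PC" "avoids \<Gamma>' (\<Lambda> \<union> N)" "\<Gamma> = insert \<delta> \<Gamma>'" by blast
      have far: "y \<notin> N" if "\<gamma> \<in> \<Gamma>'" "y \<in> fst \<gamma>" for \<gamma> y
        using G'(2) that unfolding avoids_def by blast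
      have comp1: "compatible E \<delta> \<gamma>" if "\<gamma> \<in> \<Gamma>'" for \<gamma>
        unfolding compatible_def
      proof (intro ballI conjI)
        fix x y assume x: "x \<in> fst \<delta>" and y: "y \<in> fst \<gamma>"
        have yV: "y \<in> V" using polyD PC_sub G'(1) that y by blast
        show "x \<noteq> y" using far[OF that y] inN[OF x] by blast
        show "\<not> E x y" using far[OF that y] inN[OF x] yV by blast
      qed
      have comp2: "compatible E \<gamma> \<delta>" if "\<gamma> \<in> \<Gamma>'" for \<gamma>
        using comp1[OF that] E_sym unfolding compatible_def by blast
      have "\<Gamma> \<in> PC"
        using G'(1) True comp1 comp2 unfolding G'(3) poly_configs_def by auto
      moreover have "avoids \<Gamma> \<Lambda>" using G'(2) True unfolding G'(3) avoids_def by blast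
      moreover have "poly_at \<Gamma> u = Some \<delta>"
        using poly_at_Some[OF calculation(1)] True G'(3) by blast
      ultimately show "\<Gamma> \<in> {\<Gamma>\<in>PC. avoids \<Gamma> \<Lambda> \<and> poly_at \<Gamma> u = Some \<delta>}" by blast
    qed
  qed
  have inj: "inj_on (insert \<delta>) ?B"
    using notin by (intro inj_onI) (metis insert_ident)
  have "(\<Sum>\<Gamma>\<in>{\<Gamma>\<in>PC. avoids \<Gamma> \<Lambda> \<and> poly_at \<Gamma> u = Some \<delta>}. poly_weight w \<Gamma>)
      = (\<Sum>\<Gamma>'\<in>?B. poly_weight w (insert \<delta> \<Gamma>'))"
    unfolding seteq by (rule sum.reindex[OF inj, unfolded comp_def])
  also have "\<dots> = (\<Sum>\<Gamma>'\<in>?B. w \<delta> * poly_weight w \<Gamma>')"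
  proof (intro sum.cong refl)
    fix \<Gamma>' assume a: "\<Gamma>' \<in> ?B"
    have "finite \<Gamma>'" using a PC_sub fin_Cset finite_subset by blast
    then show "poly_weight w (insert \<delta> \<Gamma>') = w \<delta> * poly_weight w \<Gamma>'"
      using notin[OF a] by (simp add: poly_weight_def)
  qed
  also have "\<dots> = w \<delta> * Z (\<Lambda> \<union> N)" by (simp add: Z_def sum_distrib_left)
  finally show ?thesis using True N_def by simp
qed

end

definition bern_out :: "'a \<Rightarrow> real \<Rightarrow> 'a option pmf" where
  "bern_out \<gamma> r = map_pmf (\<lambda>b. if b then Some \<gamma> else None) (bernoulli_pmf r)"

lemma pmf_bern_out:
  assumes "0 \<le> r" "r \<le> 1"
  shows "pmf (bern_out \<gamma> r) (Some \<delta>) = (if \<delta> = \<gamma> then r else 0)"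
proof (cases "\<delta> = \<gamma>")
  case True
  have "(\<lambda>b. if b then Some \<gamma> else None) -` {Some \<delta>} = {True}" using True by (auto split: if_splits)
  then show ?thesis using True assms by (simp add: bern_out_def pmf_map measure_pmf_single)
next
  case False
  have "(\<lambda>b. if b then Some \<gamma> else None) -` {Some \<delta>} = {}" using False by (auto split: if_splits)
  then show ?thesis using False by (simp add: bern_out_def pmf_map split: if_splits)
qed

lemma bern_out_1: "bern_out \<gamma> 1 = return_pmf (Some \<gamma>)"
proof -
  have "bernoulli_pmf 1 = return_pmf True"
    by (rule pmf_eqI) (case_tac i, auto)
  then show ?thesis by (simp add: bern_out_def)
qed

context PM begin

lemma w_sum_le: "(\<Sum>\<gamma>\<in>CU u. w \<gamma>) \<le> 1/2"
proof -
  have "(\<Sum>\<gamma>\<in>CU u. w \<gamma>) \<le> (\<Sum>\<gamma>\<in>CU u. w \<gamma> * (1 + real (card (nbhd_plus V E (fst \<gamma>)))))"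
    using w_nonneg by (intro sum_mono) (auto simp: CU_def intro!: mult_le_cancel_left1[THEN iffD2])
  also have "\<dots> \<le> 1/2" by (rule m_bound)
  finally show ?thesis .
qed

lemma pmf_nu: "pmf (nu Cset w u) x = (case x of None \<Rightarrow> 1 - (\<Sum>\<gamma>\<in>CU u. w \<gamma>)
       | Some \<gamma> \<Rightarrow> (if \<gamma> \<in> CU u then w \<gamma> else 0))"
proof -
  define f where "f = (\<lambda>x. case x of None \<Rightarrow> 1 - (\<Sum>\<gamma>\<in>CU u. w \<gamma>)
       | Some \<gamma> \<Rightarrow> (if \<gamma> \<in> CU u then w \<gamma> else 0))"
  have nu_eq: "nu Cset w u = embed_pmf f" unfolding nu_def f_def CU_def by simp
  have f0: "0 \<le> f x" for x using w_sum_le[of u] w_nonneg by (auto simp: f_def CU_def split: option.split)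
  have "(\<integral>\<^sup>+ x. ennreal (f x) \<partial>count_space UNIV) = (\<Sum>x\<in>insert None (Some ` CU u). ennreal (f x))"
    by (rule nn_integral_count_space') (auto simp: f_def CU_fin split: option.split)
  also have "\<dots> = ennreal (\<Sum>x\<in>insert None (Some ` CU u). f x)" using f0 by simp
  also have "(\<Sum>x\<in>insert None (Some ` CU u). f x) = f None + (\<Sum>\<gamma>\<in>CU u. f (Some \<gamma>))"
    using CU_fin by (simp add: sum.reindex)
  also have "\<dots> = 1" by (simp add: f_def)
  finally have "(\<integral>\<^sup>+ x. ennreal (f x) \<partial>count_space UNIV) = 1" by simp
  then show ?thesis unfolding nu_eq using f0 by (subst pmf_embed_pmf) (auto simp: f_def)
qed

lemma set_nu: "set_pmf (nu Cset w u) \<subseteq> insert None (Some ` CU u)"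
  by (auto simp: set_pmf_iff pmf_nu split: option.splits if_splits)

lemma Z_pos: "Z \<Lambda> > 0" using Z_ge1[of \<Lambda>] by simp

lemma ratio: "0 \<le> Z (\<Lambda> \<union> A) / Z \<Lambda>" "Z (\<Lambda> \<union> A) / Z \<Lambda> \<le> 1"
  using Z_pos[of \<Lambda>] Z_pos[of "\<Lambda> \<union> A"] Z_mono[of \<Lambda> "\<Lambda> \<union> A"] by auto

definition Pt :: "('v \<times> 'v set) + ('v list \<times> 'v set \<times> 'v polymer) \<Rightarrow> 'v polymer option spmf" where
  "Pt x = (case x of Inl (u, \<Lambda>) \<Rightarrow> spmf_of_pmf (map_pmf (\<lambda>\<Gamma>. poly_at \<Gamma> u) (muL \<Lambda>))
     | Inr (vs, \<Lambda>, \<gamma>) \<Rightarrow> spmf_of_pmf (bern_out \<gamma> (Z (\<Lambda> \<union> set vs) / Z \<Lambda>)))"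

lemma pmf_Pt_Inl:
  "pmf (map_pmf (\<lambda>\<Gamma>. poly_at \<Gamma> u) (muL \<Lambda>)) (Some \<delta>) =
    (if \<delta> \<in> Cset \<and> u \<in> fst \<delta> \<and> fst \<delta> \<inter> \<Lambda> = {} then w \<delta> * Z (\<Lambda> \<union> nbhd_plus V E (fst \<delta>)) else 0) / Z \<Lambda>"
proof -
  have "pmf (map_pmf (\<lambda>\<Gamma>. poly_at \<Gamma> u) (muL \<Lambda>)) (Some \<delta>) =
      measure_pmf.prob (muL \<Lambda>) {\<Gamma>. poly_at \<Gamma> u = Some \<delta>}"
    by (simp add: pmf_map vimage_def)
  also have "\<dots> = (\<Sum>\<Gamma>\<in>{\<Gamma>\<in>PC. avoids \<Gamma> \<Lambda> \<and> poly_at \<Gamma> u = Some \<delta>}. poly_weight w \<Gamma>) / Z \<Lambda>"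
    by (simp add: measure_muL)
  finally show ?thesis by (simp add: Z_Some)
qed

end

context PM begin

definition FF :: "('v set \<Rightarrow> 'v list) \<Rightarrow> (('v \<times> 'v set) + ('v list \<times> 'v set \<times> 'v polymer) \<Rightarrow> 'v polymer option spmf)
   \<Rightarrow> ('v \<times> 'v set) + ('v list \<times> 'v set \<times> 'v polymer) \<Rightarrow> 'v polymer option spmf" where
  "FF ord f x = (case x of
     Inl (u, \<Lambda>) \<Rightarrow>
       (if u \<in> \<Lambda> then return_spmf None else
        bind_spmf (spmf_of_pmf (nu Cset w u)) (\<lambda>go. case go of
          None \<Rightarrow> return_spmf None
        | Some \<gamma> \<Rightarrow>
            (if fst \<gamma> \<inter> \<Lambda> \<noteq> {} then return_spmf None
             else f (Inr (u # ord (nbhd_plus V E (fst \<gamma>) - {u}), \<Lambda>, \<gamma>)))))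
   | Inr (vs, \<Lambda>, \<gamma>) \<Rightarrow>
       (case vs of
          [] \<Rightarrow> return_spmf (Some \<gamma>)
        | v # vs' \<Rightarrow>
            bind_spmf (f (Inl (v, \<Lambda>))) (\<lambda>g'. case g' of
              None \<Rightarrow> f (Inr (vs', insert v \<Lambda>, \<gamma>))
            | Some _ \<Rightarrow> return_spmf None)))"

lemma FF_mono:
  assumes "\<And>x. ord_spmf (=) (f1 x) (f2 x)"
  shows "ord_spmf (=) (FF ord f1 x) (FF ord f2 x)"
proof (cases x)
  case (Inl a)
  then obtain u \<Lambda> where x: "x = Inl (u, \<Lambda>)" by (cases a) auto
  show ?thesis unfolding x FF_def
    by (auto simp del: bind_spmf_of_pmf intro!: bind_spmf_mono' ord_spmf_reflI assms split: option.split)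
next
  case (Inr b)
  then obtain vs \<Lambda> \<gamma> where x: "x = Inr (vs, \<Lambda>, \<gamma>)" by (cases b) auto
  show ?thesis unfolding x FF_def
    by (cases vs) (auto intro!: bind_spmf_mono' ord_spmf_reflI assms split: option.split)
qed


lemma ms_le_Pt:
  assumes FP: "\<And>x. FF ord Pt x = Pt x"
  shows "ord_spmf (=) (ms_aux V E Cset w ord x) (Pt x)"
proof -
  have "\<forall>x. ord_spmf (=) (ms_aux V E Cset w ord x) (Pt x)"
  proof (induction rule: ms_aux.fixp_induct)
    case 1
    show ?case
      by (intro admissible_all admissible_leI[OF ccpo_spmf] mcont_call ccpo.mcont_const[OF ccpo_spmf])
  next
    case 2
    show ?case by simp
  next
    case (3 f)
    have h: "\<forall>x. ord_spmf (=) (FF ord f x) (Pt x)"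
    proof
      fix x
      have "ord_spmf (=) (FF ord f x) (FF ord Pt x)" using 3 by (intro FF_mono) simp
      then show "ord_spmf (=) (FF ord f x) (Pt x)" using FP by simp
    qed
    show ?case using h unfolding FF_def by simp
  qed
  then show ?thesis by blast
qed

end

lemma bind_to_pmf: "bind_spmf (spmf_of_pmf X) (\<lambda>y. spmf_of_pmf (K y)) = spmf_of_pmf (bind_pmf X K)"
  by (simp add: spmf_of_pmf_bind)

context PM begin

lemma pmf_bind_muL:
  "pmf (bind_pmf (muL \<Lambda>) F) y = (\<Sum>\<Gamma>\<in>{\<Gamma>\<in>PC. avoids \<Gamma> \<Lambda>}. poly_weight w \<Gamma> / Z \<Lambda> * pmf (F \<Gamma>) y)"
proof -
  have "pmf (bind_pmf (muL \<Lambda>) F) y = (\<integral>\<Gamma>. pmf (F \<Gamma>) y \<partial>measure_pmf (muL \<Lambda>))" by (rule pmf_bind)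
  also have "\<dots> = (\<Sum>\<Gamma>\<in>{\<Gamma>\<in>PC. avoids \<Gamma> \<Lambda>}. pmf (muL \<Lambda>) \<Gamma> *\<^sub>R pmf (F \<Gamma>) y)"
    by (rule integral_measure_pmf) (use PC_fin set_muL in auto)
  also have "\<dots> = (\<Sum>\<Gamma>\<in>{\<Gamma>\<in>PC. avoids \<Gamma> \<Lambda>}. poly_weight w \<Gamma> / Z \<Lambda> * pmf (F \<Gamma>) y)"
    by (intro sum.cong refl) (simp add: pmf_muL)
  finally show ?thesis .
qed

lemma pmf_bind_nu:
  "pmf (bind_pmf (nu Cset w u) F) y = (1 - (\<Sum>\<gamma>\<in>CU u. w \<gamma>)) * pmf (F None) y + (\<Sum>\<gamma>\<in>CU u. w \<gamma> * pmf (F (Some \<gamma>)) y)"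
proof -
  have "pmf (bind_pmf (nu Cset w u) F) y = (\<integral>go. pmf (F go) y \<partial>measure_pmf (nu Cset w u))" by (rule pmf_bind)
  also have "\<dots> = (\<Sum>go\<in>insert None (Some ` CU u). pmf (nu Cset w u) go *\<^sub>R pmf (F go) y)"
    by (rule integral_measure_pmf) (use CU_fin set_nu in auto)
  also have "\<dots> = pmf (nu Cset w u) None * pmf (F None) y + (\<Sum>\<gamma>\<in>CU u. pmf (nu Cset w u) (Some \<gamma>) * pmf (F (Some \<gamma>)) y)"
    using CU_fin by (simp add: sum.reindex)
  also have "\<dots> = (1 - (\<Sum>\<gamma>\<in>CU u. w \<gamma>)) * pmf (F None) y + (\<Sum>\<gamma>\<in>CU u. w \<gamma> * pmf (F (Some \<gamma>)) y)"
    by (simp add: pmf_nu)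
  finally show ?thesis .
qed

lemma set_L:
  assumes ord: "\<forall>S. finite S \<longrightarrow> set (ord S) = S \<and> distinct (ord S)" and g: "\<gamma> \<in> CU u"
  shows "set (u # ord (nbhd_plus V E (fst \<gamma>) - {u})) = nbhd_plus V E (fst \<gamma>)"
proof -
  have gC: "\<gamma> \<in> Cset" "u \<in> fst \<gamma>" using g by (auto simp: CU_def)
  have fS: "finite (fst \<gamma>)" using finite_subset[OF conjunct1[OF polyD[OF gC(1)]] finV] .
  have fN: "finite (nbhd_plus V E (fst \<gamma>) - {u})" using nplus_fin[OF fS] by simp
  have "u \<in> nbhd_plus V E (fst \<gamma>)" using gC(2) fst_sub_nplus by blast
  then show ?thesis using ord fN by auto
qed

lemma Pt_fix:
  assumes ord: "\<forall>S. finite S \<longrightarrow> set (ord S) = S \<and> distinct (ord S)"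
  shows "FF ord Pt x = Pt x"
proof (cases x)
  case (Inl a)
  then obtain u \<Lambda> where x: "x = Inl (u, \<Lambda>)" by (cases a) auto
  show ?thesis
  proof (cases "u \<in> \<Lambda>")
    case True
    have "map_pmf (\<lambda>\<Gamma>. poly_at \<Gamma> u) (muL \<Lambda>) = return_pmf None"
    proof (rule spmf_eqI)
      fix \<delta>
      show "spmf (map_pmf (\<lambda>\<Gamma>. poly_at \<Gamma> u) (muL \<Lambda>)) \<delta> = spmf (return_pmf None) \<delta>"
        using True by (auto simp: pmf_Pt_Inl)
    qed
    then show ?thesis using True unfolding x FF_def Pt_def by simp
  next
    case False
    define K :: "'v polymer option \<Rightarrow> 'v polymer option pmf" where "K = (\<lambda>go. case go of None \<Rightarrow> return_pmf None
        | Some \<gamma> \<Rightarrow> (if fst \<gamma> \<inter> \<Lambda> \<noteq> {} then return_pmf None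
            else bern_out \<gamma> (Z (\<Lambda> \<union> set (u # ord (nbhd_plus V E (fst \<gamma>) - {u}))) / Z \<Lambda>)))"
    have FFe: "FF ord Pt x = bind_spmf (spmf_of_pmf (nu Cset w u)) (\<lambda>go. spmf_of_pmf (K go))"
      unfolding x FF_def K_def Pt_def using False
      apply (simp del: bind_spmf_of_pmf)
      apply (rule arg_cong[where f="bind_spmf (spmf_of_pmf (nu Cset w u))"])
      apply (auto simp: fun_eq_iff split: option.split)
      done
    define T :: "'v polymer \<Rightarrow> real" where "T \<delta> = (if fst \<delta> \<inter> \<Lambda> \<noteq> {} then 0 else Z (\<Lambda> \<union> nbhd_plus V E (fst \<delta>)) / Z \<Lambda>)" for \<delta>
    have "bind_pmf (nu Cset w u) K = map_pmf (\<lambda>\<Gamma>. poly_at \<Gamma> u) (muL \<Lambda>)"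
    proof (rule spmf_eqI)
      fix \<delta>
      have Kg: "w \<gamma> * pmf (K (Some \<gamma>)) (Some \<delta>) = (if \<gamma> = \<delta> then w \<delta> * T \<delta> else 0)"
        if g: "\<gamma> \<in> CU u" for \<gamma>
      proof -
        have KS: "K (Some \<gamma>) = (if fst \<gamma> \<inter> \<Lambda> \<noteq> {} then return_pmf None
            else bern_out \<gamma> (Z (\<Lambda> \<union> nbhd_plus V E (fst \<gamma>)) / Z \<Lambda>))"
          by (simp only: K_def option.case set_L[OF ord g])
        show ?thesis unfolding KS using ratio[of \<Lambda> "nbhd_plus V E (fst \<gamma>)"]
          by (auto simp: T_def pmf_bern_out)
      qed
      have "spmf (bind_pmf (nu Cset w u) K) \<delta> = (\<Sum>\<gamma>\<in>CU u. w \<gamma> * pmf (K (Some \<gamma>)) (Some \<delta>))"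
        by (simp add: pmf_bind_nu K_def)
      also have "\<dots> = (\<Sum>\<gamma>\<in>CU u. (if \<gamma> = \<delta> then w \<delta> * T \<delta> else 0))"
        using Kg by (intro sum.cong refl) auto
      also have "\<dots> = (if \<delta> \<in> CU u then w \<delta> * T \<delta> else 0)"
        using CU_fin by (simp add: sum.delta)
      also have "\<dots> = spmf (map_pmf (\<lambda>\<Gamma>. poly_at \<Gamma> u) (muL \<Lambda>)) \<delta>"
        using Z_pos[of \<Lambda>] by (auto simp: pmf_Pt_Inl CU_def T_def)
      finally show "spmf (bind_pmf (nu Cset w u) K) \<delta> = spmf (map_pmf (\<lambda>\<Gamma>. poly_at \<Gamma> u) (muL \<Lambda>)) \<delta>" .
    qed
    then show ?thesis unfolding FFe bind_to_pmf using x by (simp add: Pt_def)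
  qed
next
  case (Inr b)
  then obtain vs \<Lambda> \<gamma> where x: "x = Inr (vs, \<Lambda>, \<gamma>)" by (cases b) auto
  show ?thesis
  proof (cases vs)
    case Nil
    have "Z \<Lambda> / Z \<Lambda> = 1" using Z_pos[of \<Lambda>] by simp
    then show ?thesis unfolding x Nil FF_def Pt_def by (simp add: bern_out_1)
  next
    case (Cons v vs')
    define r' where "r' = Z (insert v \<Lambda> \<union> set vs') / Z (insert v \<Lambda>)"
    define K :: "'v polymer option \<Rightarrow> 'v polymer option pmf" where "K = (\<lambda>g'. case g' of None \<Rightarrow> bern_out \<gamma> r' | Some (_::'v polymer) \<Rightarrow> return_pmf None)"
    have FFe: "FF ord Pt x = bind_spmf (spmf_of_pmf (map_pmf (\<lambda>\<Gamma>. poly_at \<Gamma> v) (muL \<Lambda>))) (\<lambda>go. spmf_of_pmf (K go))"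
      unfolding x Cons FF_def K_def Pt_def r'_def
      apply (simp del: bind_spmf_of_pmf)
      apply (rule arg_cong[where f="bind_spmf (spmf_of_pmf (map_pmf (\<lambda>\<Gamma>. poly_at \<Gamma> v) (muL \<Lambda>)))"])
      apply (auto simp: fun_eq_iff split: option.split)
      done
    have r': "0 \<le> r'" "r' \<le> 1" unfolding r'_def using ratio[of "insert v \<Lambda>" "set vs'"] by simp_all
    have "bind_pmf (map_pmf (\<lambda>\<Gamma>. poly_at \<Gamma> v) (muL \<Lambda>)) K = bern_out \<gamma> (Z (\<Lambda> \<union> set vs) / Z \<Lambda>)"
    proof (rule spmf_eqI)
      fix \<delta>
      define c where "c = (if \<delta> = \<gamma> then r' else 0)"
      have "spmf (bind_pmf (map_pmf (\<lambda>\<Gamma>. poly_at \<Gamma> v) (muL \<Lambda>)) K) \<delta>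
          = (\<Sum>\<Gamma>\<in>{\<Gamma>\<in>PC. avoids \<Gamma> \<Lambda>}. poly_weight w \<Gamma> / Z \<Lambda> * pmf (K (poly_at \<Gamma> v)) (Some \<delta>))"
        by (simp add: bind_map_pmf pmf_bind_muL)
      also have "\<dots> = (\<Sum>\<Gamma>\<in>{\<Gamma>\<in>PC. avoids \<Gamma> \<Lambda>}. if poly_at \<Gamma> v = None then poly_weight w \<Gamma> / Z \<Lambda> * c else 0)"
        by (intro sum.cong refl) (auto simp: K_def c_def pmf_bern_out r' split: option.split)
      also have "\<dots> = (\<Sum>\<Gamma>\<in>{\<Gamma>\<in>{\<Gamma>\<in>PC. avoids \<Gamma> \<Lambda>}. poly_at \<Gamma> v = None}. poly_weight w \<Gamma> / Z \<Lambda> * c)"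
        by (rule sum.inter_filter[symmetric]) (use PC_fin in auto)
      also have "{\<Gamma>\<in>{\<Gamma>\<in>PC. avoids \<Gamma> \<Lambda>}. poly_at \<Gamma> v = None} = {\<Gamma>\<in>PC. avoids \<Gamma> \<Lambda> \<and> poly_at \<Gamma> v = None}"
        by auto
      also have "(\<Sum>\<Gamma>\<in>{\<Gamma>\<in>PC. avoids \<Gamma> \<Lambda> \<and> poly_at \<Gamma> v = None}. poly_weight w \<Gamma> / Z \<Lambda> * c)
          = Z (insert v \<Lambda>) / Z \<Lambda> * c"
        by (simp add: Z_None sum_distrib_right[symmetric] sum_divide_distrib[symmetric])
      also have "\<dots> = (if \<delta> = \<gamma> then Z (\<Lambda> \<union> set vs) / Z \<Lambda> else 0)"
      proof -
        have "insert v \<Lambda> \<union> set vs' = \<Lambda> \<union> set vs" using Cons by auto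
        then show ?thesis using Z_pos[of "insert v \<Lambda>"] Z_pos[of \<Lambda>] by (simp add: c_def r'_def)
      qed
      also have "\<dots> = spmf (bern_out \<gamma> (Z (\<Lambda> \<union> set vs) / Z \<Lambda>)) \<delta>"
        using ratio[of \<Lambda> "set vs"] by (simp add: pmf_bern_out)
      finally show "spmf (bind_pmf (map_pmf (\<lambda>\<Gamma>. poly_at \<Gamma> v) (muL \<Lambda>)) K) \<delta> = spmf (bern_out \<gamma> (Z (\<Lambda> \<union> set vs) / Z \<Lambda>)) \<delta>" .
    qed
    then show ?thesis unfolding FFe bind_to_pmf using x by (simp add: Pt_def)
  qed
qed

end

lemma bind_deficit:
  fixes B :: real
  assumes B: "0 \<le> B" and f: "\<And>y. 1 - weight_spmf (f y) \<le> B"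
  shows "1 - weight_spmf (bind_spmf p f) \<le> (1 - weight_spmf p) + B"
proof -
  have "(\<integral>y. (1 - B) \<partial>measure_spmf p) \<le> (\<integral>y. weight_spmf (f y) \<partial>measure_spmf p)"
  proof (rule integral_mono)
    show "integrable (measure_spmf p) (\<lambda>y. 1 - B)" by simp
    show "integrable (measure_spmf p) (\<lambda>y. weight_spmf (f y))"
      by (rule measure_spmf.integrable_const_bound[where B=1]) (simp_all add: weight_spmf_le_1 weight_spmf_nonneg)
    show "1 - B \<le> weight_spmf (f y)" for y using f[of y] by simp
  qed
  moreover have "(\<integral>y. (1 - B) \<partial>measure_spmf p) = weight_spmf p * (1 - B)"
    by (simp add: weight_spmf_def)
  moreover have "weight_spmf (bind_spmf p f) = (\<integral>y. weight_spmf (f y) \<partial>measure_spmf p)"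
    by (simp add: weight_bind_spmf comp_def)
  ultimately have "weight_spmf p * (1 - B) \<le> weight_spmf (bind_spmf p f)" by simp
  moreover have "weight_spmf p * B \<le> B" using B weight_spmf_le_1[of p] by (simp add: mult_left_le_one_le weight_spmf_nonneg)
  ultimately show ?thesis by (simp add: algebra_simps)
qed

context PM begin

lemma lossless_ms:
  assumes ord: "\<forall>S. finite S \<longrightarrow> set (ord S) = S \<and> distinct (ord S)"
  shows "lossless_spmf (ms_aux V E Cset w ord (Inl (u, \<Lambda>)))"
proof -
  let ?ms = "ms_aux V E Cset w ord"
  define D where "D x = 1 - weight_spmf (?ms x)" for x
  have D01: "0 \<le> D x" "D x \<le> 1" for x unfolding D_def using weight_spmf_le_1 weight_spmf_nonneg by auto
  define M where "M = (SUP p\<in>UNIV. D (Inl p))"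
  have bdd: "bdd_above (range (\<lambda>p. D (Inl p)))" using D01 by (intro bdd_aboveI) auto
  have DM: "D (Inl p) \<le> M" for p unfolding M_def by (rule cSUP_upper[OF _ bdd]) simp
  have M0: "0 \<le> M" using DM[of "(u, \<Lambda>)"] D01[of "Inl (u, \<Lambda>)"] by simp
  have Inr_bound: "\<forall>\<Lambda>. D (Inr (vs, \<Lambda>, \<gamma>)) \<le> real (length vs) * M" for vs \<gamma>
  proof (induction vs)
    case Nil
    show ?case by (simp add: D_def ms_aux.simps)
  next
    case (Cons v vs)
    show ?case
    proof
      fix \<Lambda>
      have "?ms (Inr (v # vs, \<Lambda>, \<gamma>)) = bind_spmf (?ms (Inl (v, \<Lambda>)))
          (\<lambda>g'. case g' of None \<Rightarrow> ?ms (Inr (vs, insert v \<Lambda>, \<gamma>)) | Some _ \<Rightarrow> return_spmf None)"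
        by (subst ms_aux.simps) simp
      moreover have "1 - weight_spmf (bind_spmf (?ms (Inl (v, \<Lambda>)))
          (\<lambda>g'. case g' of None \<Rightarrow> ?ms (Inr (vs, insert v \<Lambda>, \<gamma>)) | Some _ \<Rightarrow> return_spmf None))
          \<le> (1 - weight_spmf (?ms (Inl (v, \<Lambda>)))) + real (length vs) * M"
      proof (rule bind_deficit)
        show "0 \<le> real (length vs) * M" using M0 by simp
        fix y :: "'v polymer option"
        show "1 - weight_spmf (case y of None \<Rightarrow> ?ms (Inr (vs, insert v \<Lambda>, \<gamma>)) | Some _ \<Rightarrow> return_spmf None)
            \<le> real (length vs) * M"
          using Cons.IH M0 by (cases y) (auto simp: D_def)
      qed
      ultimately have "D (Inr (v # vs, \<Lambda>, \<gamma>)) \<le> D (Inl (v, \<Lambda>)) + real (length vs) * M"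
        by (simp add: D_def)
      then show "D (Inr (v # vs, \<Lambda>, \<gamma>)) \<le> real (length (v # vs)) * M"
        using DM[of "(v, \<Lambda>)"] by (simp add: algebra_simps)
    qed
  qed
  have Inl_bound: "D (Inl (u', \<Lambda>')) \<le> M / 2" for u' \<Lambda>'
  proof (cases "u' \<in> \<Lambda>'")
    case True
    then show ?thesis using M0 by (simp add: D_def ms_aux.simps)
  next
    case False
    define K where "K = (\<lambda>go. case go of None \<Rightarrow> return_spmf None
        | Some \<gamma> \<Rightarrow> (if fst \<gamma> \<inter> \<Lambda>' \<noteq> {} then return_spmf None
            else ?ms (Inr (u' # ord (nbhd_plus V E (fst \<gamma>) - {u'}), \<Lambda>', \<gamma>))))"
    have e: "?ms (Inl (u', \<Lambda>')) = bind_spmf (spmf_of_pmf (nu Cset w u')) K"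
      unfolding K_def using False by (subst ms_aux.simps) (simp del: bind_spmf_of_pmf)
    have wK: "weight_spmf (K None) = 1" by (simp add: K_def)
    have dK: "1 - weight_spmf (K (Some \<gamma>)) \<le> (1 + real (card (nbhd_plus V E (fst \<gamma>)))) * M"
      if g: "\<gamma> \<in> CU u'" for \<gamma>
    proof (cases "fst \<gamma> \<inter> \<Lambda>' \<noteq> {}")
      case True then show ?thesis using M0 by (simp add: K_def)
    next
      case False
      have gC: "\<gamma> \<in> Cset" using g by (simp add: CU_def)
      have fS: "finite (fst \<gamma>)" using finite_subset[OF conjunct1[OF polyD[OF gC]] finV] .
      have fN: "finite (nbhd_plus V E (fst \<gamma>) - {u'})" using nplus_fin[OF fS] by simp
      have "length (ord (nbhd_plus V E (fst \<gamma>) - {u'})) = card (nbhd_plus V E (fst \<gamma>) - {u'})"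
        using ord fN by (metis distinct_card)
      also have "\<dots> \<le> card (nbhd_plus V E (fst \<gamma>))" using nplus_fin[OF fS] by (intro card_mono) auto
      finally have len: "real (length (u' # ord (nbhd_plus V E (fst \<gamma>) - {u'}))) \<le> 1 + real (card (nbhd_plus V E (fst \<gamma>)))"
        by simp
      have "1 - weight_spmf (K (Some \<gamma>)) = D (Inr (u' # ord (nbhd_plus V E (fst \<gamma>) - {u'}), \<Lambda>', \<gamma>))"
        using False by (simp add: K_def D_def)
      also have "\<dots> \<le> real (length (u' # ord (nbhd_plus V E (fst \<gamma>) - {u'}))) * M"
        using Inr_bound by blast
      also have "\<dots> \<le> (1 + real (card (nbhd_plus V E (fst \<gamma>)))) * M"
        using len M0 by (rule mult_right_mono)
      finally show ?thesis .
    qed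
    have "weight_spmf (?ms (Inl (u', \<Lambda>'))) = (\<integral>go. weight_spmf (K go) \<partial>measure_pmf (nu Cset w u'))"
      unfolding e by (simp add: weight_bind_spmf comp_def del: bind_spmf_of_pmf)
    also have "\<dots> = (\<Sum>go\<in>insert None (Some ` CU u'). pmf (nu Cset w u') go *\<^sub>R weight_spmf (K go))"
      by (rule integral_measure_pmf) (use CU_fin set_nu in auto)
    also have "\<dots> = pmf (nu Cset w u') None * weight_spmf (K None)
        + (\<Sum>\<gamma>\<in>CU u'. pmf (nu Cset w u') (Some \<gamma>) * weight_spmf (K (Some \<gamma>)))"
      using CU_fin by (simp add: sum.reindex)
    also have "\<dots> = (1 - (\<Sum>\<gamma>\<in>CU u'. w \<gamma>)) + (\<Sum>\<gamma>\<in>CU u'. w \<gamma> * weight_spmf (K (Some \<gamma>)))"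
      using wK by (simp add: pmf_nu)
    finally have "D (Inl (u', \<Lambda>')) = (\<Sum>\<gamma>\<in>CU u'. w \<gamma> * (1 - weight_spmf (K (Some \<gamma>))))"
      by (simp add: D_def algebra_simps sum_subtractf sum_distrib_left)
    also have "\<dots> \<le> (\<Sum>\<gamma>\<in>CU u'. w \<gamma> * ((1 + real (card (nbhd_plus V E (fst \<gamma>)))) * M))"
      using dK w_nonneg by (intro sum_mono mult_left_mono) (auto simp: CU_def)
    also have "\<dots> = (\<Sum>\<gamma>\<in>CU u'. w \<gamma> * (1 + real (card (nbhd_plus V E (fst \<gamma>))))) * M"
      by (simp add: sum_distrib_right mult.assoc)
    also have "\<dots> \<le> 1/2 * M" using m_bound M0 by (rule mult_right_mono)
    finally show ?thesis by simp
  qed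
  have "M \<le> M / 2" unfolding M_def
    by (rule cSUP_least) (use Inl_bound M_def in auto)
  then have "M \<le> 0" by simp
  then have "D (Inl (u, \<Lambda>)) \<le> 0" using DM[of "(u, \<Lambda>)"] by simp
  then have "weight_spmf (?ms (Inl (u, \<Lambda>))) = 1" using weight_spmf_le_1[of "?ms (Inl (u, \<Lambda>))"] unfolding D_def by linarith
  then show ?thesis by (simp add: lossless_spmf_def)
qed

end

context PM begin

lemma main_PM:
  assumes ord: "\<forall>S. finite S \<longrightarrow> set (ord S) = S \<and> distinct (ord S)"
  shows "lossless_spmf (ms_polymer V E Cset w ord u \<Lambda>) \<and>
    (\<forall>go. spmf (ms_polymer V E Cset w ord u \<Lambda>) go =
       mu_cond_prob E Cset w {\<Gamma>. poly_at \<Gamma> u = go} {\<Gamma>. avoids \<Gamma> \<Lambda>})"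
proof
  have L: "lossless_spmf (ms_aux V E Cset w ord (Inl (u, \<Lambda>)))" by (rule lossless_ms[OF ord])
  then show "lossless_spmf (ms_polymer V E Cset w ord u \<Lambda>)" by (simp add: ms_polymer_def)
  have eq: "ms_aux V E Cset w ord (Inl (u, \<Lambda>)) = Pt (Inl (u, \<Lambda>))"
  proof (rule ord_spmf_eq_pmf_None_eq[where Y="{}", OF Complete_Partial_Order.chain_empty])
    show "ord_spmf (=) (ms_aux V E Cset w ord (Inl (u, \<Lambda>))) (Pt (Inl (u, \<Lambda>)))"
      by (rule ms_le_Pt) (rule Pt_fix[OF ord])
    show "pmf (ms_aux V E Cset w ord (Inl (u, \<Lambda>))) None = pmf (Pt (Inl (u, \<Lambda>))) None"
      using L by (simp add: lossless_iff_pmf_None[symmetric] Pt_def)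
  qed
  have Zall: "(\<Sum>\<Gamma>\<in>PC. poly_weight w \<Gamma>) > 0"
  proof -
    have "(\<Sum>\<Gamma>\<in>PC. poly_weight w \<Gamma>) = Z {}" by (simp add: Z_def avoids_def)
    then show ?thesis using Z_pos by simp
  qed
  show "\<forall>go. spmf (ms_polymer V E Cset w ord u \<Lambda>) go =
       mu_cond_prob E Cset w {\<Gamma>. poly_at \<Gamma> u = go} {\<Gamma>. avoids \<Gamma> \<Lambda>}"
  proof
    fix go
    have "spmf (ms_polymer V E Cset w ord u \<Lambda>) go = pmf (map_pmf (\<lambda>\<Gamma>. poly_at \<Gamma> u) (muL \<Lambda>)) go"
      by (simp add: ms_polymer_def eq Pt_def)
    also have "\<dots> = measure_pmf.prob (muL \<Lambda>) {\<Gamma>. poly_at \<Gamma> u = go}"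
      by (simp add: pmf_map vimage_def)
    also have "\<dots> = (\<Sum>\<Gamma>\<in>{\<Gamma>\<in>PC. avoids \<Gamma> \<Lambda> \<and> poly_at \<Gamma> u = go}. poly_weight w \<Gamma>) / Z \<Lambda>"
      by (simp add: measure_muL)
    also have "\<dots> = mu_cond_prob E Cset w {\<Gamma>. poly_at \<Gamma> u = go} {\<Gamma>. avoids \<Gamma> \<Lambda>}"
    proof -
      have s1: "PC \<inter> ({\<Gamma>. poly_at \<Gamma> u = go} \<inter> {\<Gamma>. avoids \<Gamma> \<Lambda>}) = {\<Gamma>\<in>PC. avoids \<Gamma> \<Lambda> \<and> poly_at \<Gamma> u = go}"
        by auto
      have s2: "PC \<inter> {\<Gamma>. avoids \<Gamma> \<Lambda>} = {\<Gamma>\<in>PC. avoids \<Gamma> \<Lambda>}" by auto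
      show ?thesis unfolding mu_cond_prob_def mu_prob_def s1 s2 using Zall
        by (simp add: Z_def)
    qed
    finally show "spmf (ms_polymer V E Cset w ord u \<Lambda>) go =
       mu_cond_prob E Cset w {\<Gamma>. poly_at \<Gamma> u = go} {\<Gamma>. avoids \<Gamma> \<Lambda>}" .
  qed
qed

end

theorem lemma4p11:
  fixes V :: "'v set" and E :: "'v \<Rightarrow> 'v \<Rightarrow> bool" and q :: nat and g :: "'v \<Rightarrow> nat"
    and Cset :: "'v polymer set" and w :: "'v polymer \<Rightarrow> real" and C :: real
    and \<Delta> :: nat and ord :: "'v set \<Rightarrow> 'v list" and u :: 'v and \<Lambda> :: "'v set"
  assumes graph: "simple_graph V E"
    and Delta: "\<Delta> = max_degree V E" and Delta_pos: "\<Delta> \<ge> 1"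
    and q: "q \<ge> 2"
    and g: "\<forall>v\<in>V. g v \<in> {1..q}"
    and Cset: "\<forall>\<gamma>\<in>Cset. is_polymer V E q g \<gamma>"
    and w_nonneg: "\<forall>\<gamma>\<in>Cset. w \<gamma> \<ge> 0"
    and C: "C \<ge> 10"
    and psc: "polymer_sampling_condition C q \<Delta> Cset w"
    and ord: "\<forall>S. finite S \<longrightarrow> set (ord S) = S \<and> distinct (ord S)"
    and u: "u \<in> V" and Lambda: "\<Lambda> \<subseteq> V"
  shows "lossless_spmf (ms_polymer V E Cset w ord u \<Lambda>) \<and>
    (\<forall>go. (go = None \<or> (\<exists>\<gamma>. go = Some \<gamma> \<and> \<gamma> \<in> Cset \<and> u \<in> fst \<gamma>)) \<longrightarrow>
       spmf (ms_polymer V E Cset w ord u \<Lambda>) go =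
       mu_cond_prob E Cset w {\<Gamma>. poly_at \<Gamma> u = go} {\<Gamma>. avoids \<Gamma> \<Lambda>})"
proof -
  obtain \<theta> where th: "\<theta> \<ge> C * (1 + ln (real (q - 1) * real \<Delta>))"
    and wl: "\<forall>\<gamma>\<in>Cset. w \<gamma> \<le> exp (- \<theta> * real (card (fst \<gamma>)))"
    using psc unfolding polymer_sampling_condition_def by blast
  define x where "x = real (q - 1) * real \<Delta>"
  have q1: "real (q - 1) \<ge> 1" using q by simp
  have D1: "real \<Delta> \<ge> 1" using Delta_pos by simp
  have "1 * 1 \<le> real (q - 1) * real \<Delta>" by (rule mult_mono[OF q1 D1]) auto
  then have x1: "x \<ge> 1" unfolding x_def by (simp only: mult_1)
  have lx: "ln x \<ge> 0" using x1 by simp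
  have "10 * (1 + ln x) \<le> C * (1 + ln x)" using C lx by (intro mult_right_mono) auto
  then have th2: "10 + 10 * ln x \<le> \<theta>" using th unfolding x_def by simp
  have e1: "2 \<le> exp (1::real)" using exp_ge_add_one_self[of 1] by simp
  have "exp (10::real) = exp 1 ^ 10" using exp_of_nat_mult[of 10 "1::real"] by simp
  moreover have "(2::real) ^ 10 \<le> exp 1 ^ 10" using e1 by (intro power_mono) auto
  ultimately have e10: "32 \<le> exp (10::real)" by simp
  have "exp (10 * ln x) = x ^ 10" using exp_of_nat_mult[of 10 "ln x"] x1 by simp
  then have "exp (10 + 10 * ln x) = exp 10 * x ^ 10" by (simp add: exp_add)
  moreover have "x ^ 2 \<le> x ^ 10" using x1 by (intro power_increasing) auto
  moreover have "real (q - 1) * real \<Delta> ^ 2 \<le> x ^ 2"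
  proof -
    have aa: "real (q - 1) \<le> real (q - 1) * real (q - 1)" using mult_right_mono[OF q1, of "real (q - 1)"] by simp
    have "real (q - 1) * real \<Delta> ^ 2 \<le> (real (q - 1) * real (q - 1)) * real \<Delta> ^ 2"
      by (rule mult_right_mono[OF aa]) simp
    also have "\<dots> = x ^ 2" unfolding x_def by (simp only: power2_eq_square mult_ac)
    finally show ?thesis .
  qed
  ultimately have E10: "exp (10 + 10 * ln x) = exp 10 * x ^ 10" and B: "real (q - 1) * real \<Delta> ^ 2 \<le> x ^ 10"
    by auto
  have "32 * (real (q - 1) * real \<Delta> ^ 2) \<le> exp 10 * x ^ 10"
    by (rule mult_mono[OF e10 B]) auto
  then have "32 * (real (q - 1) * real \<Delta> ^ 2) \<le> exp (10 + 10 * ln x)" by (simp only: E10)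
  also have "\<dots> \<le> exp \<theta>" using th2 by simp
  finally have theta: "32 * real (q - 1) * real \<Delta> ^ 2 \<le> exp \<theta>" by (simp add: mult.assoc)
  interpret PM V E q g Cset w \<Delta> \<theta>
    using graph Delta Delta_pos q g Cset w_nonneg wl theta by unfold_locales auto
  show ?thesis using main_PM[OF ord, of u \<Lambda>] by blast
qed


end
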